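(* Let $d\ge1$, $k\ge1$, and let $G=(V,D)$ be a $k$-fold $\mathcal{R}_d$-circuit with at most one technicolour vertex. Then $G$ is a trivial $k$-fold $\mathcal{R}_d$-circuit.
   Context: For a graph $G=(V,E)$ and a generic $p:V\to\mathbb{R}^d$ (coordinates algebraically independent over $\mathbb{Q}$), the rigidity matrix has a row for each $uv\in E$ with $p(u)-p(v)$ in the $d$ columns of $u$, $p(v)-p(u)$ in those of $v$, zeros elsewhere; $\mathcal{R}_d$ is its row matroid, with rank $r_d$. A set of edges is cyclic if it is a union of $\mathcal{R}_d$-circuits. $(V,D)$ is a $k$-fold $\mathcal{R}_d$-circuit if $D$ is cyclic and $r_d(D)=|D|-k$. Its principal partition is the partition $\{A_1,\dots,A_\ell\}$ of $D$ such that $\{D\setminus A_i\}$ is exactly the set of $(k-1)$-fold $\mathcal{R}_d$-circuits contained in $D$ (one always has $\ell\ge k$); it is trivial if $\ell=k$. A vertex is technicolour if it is incident with edges from at least two parts of the principal partition. *)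

theory Defs
  imports Complex_Main
begin

text \<open>A polynomial is a finite set M of distinct monomials
  (exponent vectors m supported in I) with rational coefficients c.\<close>
definition alg_indep_rat :: "'i set \<Rightarrow> ('i \<Rightarrow> real) \<Rightarrow> bool" where
  "alg_indep_rat I x \<longleftrightarrow>
     (\<forall>(M :: ('i \<Rightarrow> nat) set) (c :: ('i \<Rightarrow> nat) \<Rightarrow> rat).
        finite M \<and> (\<forall>m\<in>M. \<forall>i. i \<notin> I \<longrightarrow> m i = 0) \<and>
        (\<Sum>m\<in>M. of_rat (c m) * (\<Prod>i\<in>I. x i ^ m i)) = 0
        \<longrightarrow> (\<forall>m\<in>M. c m = 0))"

definition generic :: "nat \<Rightarrow> 'v set \<Rightarrow> ('v \<Rightarrow> nat \<Rightarrow> real) \<Rightarrow> bool" where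
  "generic d V p \<longleftrightarrow> alg_indep_rat (V \<times> {..<d}) (\<lambda>(v, i). p v i)"

text \<open>Edges are 2-element vertex sets. The row of the rigidity matrix for edge e = uv:
  in column (w,i) with w in e it is p w i - p x i, x the other endpoint; zero elsewhere.\<close>
definition rig_row :: "nat \<Rightarrow> ('v \<Rightarrow> nat \<Rightarrow> real) \<Rightarrow> 'v set \<Rightarrow> ('v \<times> nat) \<Rightarrow> real" where
  "rig_row d p e = (\<lambda>(w, i). if w \<in> e \<and> i < d then (\<Sum>x\<in>e. p w i - p x i) else 0)"

definition rig_indep :: "nat \<Rightarrow> ('v \<Rightarrow> nat \<Rightarrow> real) \<Rightarrow> 'v set set \<Rightarrow> bool" where
  "rig_indep d p F \<longleftrightarrow>
     (\<forall>c :: 'v set \<Rightarrow> real. (\<forall>w i. (\<Sum>e\<in>F. c e * rig_row d p e (w, i)) = 0)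
        \<longrightarrow> (\<forall>e\<in>F. c e = 0))"

definition rig_rank :: "nat \<Rightarrow> ('v \<Rightarrow> nat \<Rightarrow> real) \<Rightarrow> 'v set set \<Rightarrow> nat" where
  "rig_rank d p F = Max {card X | X. X \<subseteq> F \<and> rig_indep d p X}"

definition rig_circuit :: "nat \<Rightarrow> ('v \<Rightarrow> nat \<Rightarrow> real) \<Rightarrow> 'v set set \<Rightarrow> bool" where
  "rig_circuit d p C \<longleftrightarrow> \<not> rig_indep d p C \<and> (\<forall>e\<in>C. rig_indep d p (C - {e}))"

definition rig_cyclic :: "nat \<Rightarrow> ('v \<Rightarrow> nat \<Rightarrow> real) \<Rightarrow> 'v set set \<Rightarrow> bool" where
  "rig_cyclic d p D \<longleftrightarrow> D = \<Union>{C. C \<subseteq> D \<and> rig_circuit d p C}"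

definition kfold_circuit :: "nat \<Rightarrow> ('v \<Rightarrow> nat \<Rightarrow> real) \<Rightarrow> nat \<Rightarrow> 'v set set \<Rightarrow> bool" where
  "kfold_circuit d p k D \<longleftrightarrow>
     finite D \<and> rig_cyclic d p D \<and> int (rig_rank d p D) = int (card D) - int k"

definition principal_partition ::
  "nat \<Rightarrow> ('v \<Rightarrow> nat \<Rightarrow> real) \<Rightarrow> nat \<Rightarrow> 'v set set \<Rightarrow> 'v set set set \<Rightarrow> bool" where
  "principal_partition d p k D P \<longleftrightarrow>
     \<Union>P = D \<and> {} \<notin> P \<and> (\<forall>A\<in>P. \<forall>B\<in>P. A \<noteq> B \<longrightarrow> A \<inter> B = {}) \<and>
     {D - A | A. A \<in> P} = {D'. D' \<subseteq> D \<and> kfold_circuit d p (k - 1) D'}"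

definition technicolour :: "'v set set set \<Rightarrow> 'v \<Rightarrow> bool" where
  "technicolour P v \<longleftrightarrow>
     (\<exists>A\<in>P. \<exists>B\<in>P. A \<noteq> B \<and> (\<exists>e\<in>A. v \<in> e) \<and> (\<exists>e\<in>B. v \<in> e))"

end

theory Submission
  imports Defs
begin

lemma indep_empty: "rig_indep d p {}"
  by (simp add: rig_indep_def)

lemma indepD:
  assumes "rig_indep d p F" "\<forall>w i. (\<Sum>e\<in>F. c e * rig_row d p e (w, i)) = 0"
  shows "\<forall>e\<in>F. c e = 0"
proof -
  have "(\<forall>w i. (\<Sum>e\<in>F. c e * rig_row d p e (w, i)) = 0) \<longrightarrow> (\<forall>e\<in>F. c e = 0)"
    using assms(1) unfolding rig_indep_def by (rule spec)
  then show ?thesis using assms(2) by (rule mp)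
qed

lemma indep_subset:
  assumes "rig_indep d p S" "T \<subseteq> S" "finite S"
  shows "rig_indep d p T"
  unfolding rig_indep_def
proof (intro allI impI)
  fix c :: "'a set \<Rightarrow> real"
  assume h: "\<forall>w i. (\<Sum>e\<in>T. c e * rig_row d p e (w, i)) = 0"
  define c' where "c' e = (if e \<in> T then c e else 0)" for e
  have "\<forall>w i. (\<Sum>e\<in>S. c' e * rig_row d p e (w, i)) = 0"
  proof (intro allI)
    fix w i
    have "(\<Sum>e\<in>S. c' e * rig_row d p e (w, i)) = (\<Sum>e\<in>T. c' e * rig_row d p e (w, i))"
      by (rule sum.mono_neutral_right) (use assms(2,3) in \<open>auto simp: c'_def\<close>)
    also have "\<dots> = (\<Sum>e\<in>T. c e * rig_row d p e (w, i))"
      by (rule sum.cong) (auto simp: c'_def)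
    finally show "(\<Sum>e\<in>S. c' e * rig_row d p e (w, i)) = 0" using h by simp
  qed
  then have "\<forall>e\<in>S. c' e = 0" by (rule indepD[OF assms(1)])
  then show "\<forall>e\<in>T. c e = 0"
  proof (intro ballI)
    fix e assume eT: "e \<in> T" and z: "\<forall>e\<in>S. c' e = 0"
    then have "c' e = 0" using assms(2) by blast
    then show "c e = 0" using eT by (simp add: c'_def)
  qed
qed

lemma rank_fin:
  assumes "finite F"
  shows "finite {card X | X. X \<subseteq> F \<and> rig_indep d p X}"
        "{card X | X. X \<subseteq> F \<and> rig_indep d p X} \<noteq> {}"
proof -
  have "{card X | X. X \<subseteq> F \<and> rig_indep d p X} \<subseteq> card ` Pow F"
  proof
    fix n assume "n \<in> {card X | X. X \<subseteq> F \<and> rig_indep d p X}"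
    then obtain X where X: "n = card X" "X \<subseteq> F" by blast
    then show "n \<in> card ` Pow F" by blast
  qed
  moreover have "finite (card ` Pow F)" using assms by simp
  ultimately show "finite {card X | X. X \<subseteq> F \<and> rig_indep d p X}"
    using finite_subset by blast
  have "card {} \<in> {card X | X. X \<subseteq> F \<and> rig_indep d p X}"
    using indep_empty[of d p] empty_subsetI[of F] by (intro CollectI exI[of _ "{}"]) simp
  then show "{card X | X. X \<subseteq> F \<and> rig_indep d p X} \<noteq> {}" by blast
qed

lemma rank_ge:
  assumes "finite F" "S \<subseteq> F" "rig_indep d p S"
  shows "card S \<le> rig_rank d p F"
proof -
  have "card S \<in> {card X | X. X \<subseteq> F \<and> rig_indep d p X}" using assms(2,3) by blast
  then show ?thesis unfolding rig_rank_def using Max_ge[OF rank_fin(1)[OF assms(1)]] by blast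
qed

lemma rank_obtain:
  assumes "finite F"
  shows "\<exists>S. S \<subseteq> F \<and> rig_indep d p S \<and> card S = rig_rank d p F"
proof -
  have "rig_rank d p F \<in> {card X | X. X \<subseteq> F \<and> rig_indep d p X}"
    unfolding rig_rank_def by (rule Max_in[OF rank_fin(1)[OF assms] rank_fin(2)[OF assms]])
  then have "\<exists>S. rig_rank d p F = card S \<and> S \<subseteq> F \<and> rig_indep d p S" by simp
  then obtain S where S: "rig_rank d p F = card S" "S \<subseteq> F" "rig_indep d p S" by blast
  then show ?thesis by (intro exI[of _ S]) simp
qed

lemma block_zero:
  assumes "finite e"
  shows "(\<Sum>w\<in>e. rig_row d p e (w, i)) = 0"
proof (cases "i < d")
  case True
  have "(\<Sum>w\<in>e. rig_row d p e (w, i)) = (\<Sum>w\<in>e. \<Sum>x\<in>e. p w i - p x i)"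
    by (rule sum.cong) (auto simp: rig_row_def True)
  also have "\<dots> = (\<Sum>w\<in>e. \<Sum>x\<in>e. p w i) - (\<Sum>w\<in>e. \<Sum>x\<in>e. p x i)"
    by (simp only: sum_subtractf)
  also have "(\<Sum>w\<in>e. \<Sum>x\<in>e. p x i) = (\<Sum>w\<in>e. \<Sum>x\<in>e. p w i)"
    by (rule sum.swap)
  finally show ?thesis by simp
next
  case False
  then show ?thesis by (simp add: rig_row_def)
qed

lemma sep_one:
  assumes fY: "finite Y" and fZ: "finite Z" and disj: "Y \<inter> Z = {}"
    and fe: "\<forall>e\<in>Y. finite e"
    and uniq: "\<forall>u v. u \<in> \<Union>Y \<inter> \<Union>Z \<longrightarrow> v \<in> \<Union>Y \<inter> \<Union>Z \<longrightarrow> u = v"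
    and dep: "\<forall>w i. (\<Sum>e\<in>Y\<union>Z. c e * rig_row d p e (w, i)) = 0"
  shows "(\<Sum>e\<in>Y. c e * rig_row d p e (w, i)) = 0"
proof -
  define f where "f w i = (\<Sum>e\<in>Y. c e * rig_row d p e (w, i))" for w i
  define g where "g w i = (\<Sum>e\<in>Z. c e * rig_row d p e (w, i))" for w i
  have fg: "f w i + g w i = 0" for w i
    using dep sum.union_disjoint[OF fY fZ disj, of "\<lambda>e. c e * rig_row d p e (w, i)"]
    by (simp add: f_def g_def)
  have outY: "f w i = 0" if "w \<notin> \<Union>Y" for w i
    unfolding f_def by (rule sum.neutral) (use that in \<open>auto simp: rig_row_def\<close>)
  have outZ: "f w i = 0" if "w \<notin> \<Union>Z" for w i
  proof -
    have "g w i = 0"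
      unfolding g_def by (rule sum.neutral) (use that in \<open>auto simp: rig_row_def\<close>)
    then show ?thesis using fg[of w i] by simp
  qed
  have fU: "finite (\<Union>Y)" using fY fe by blast
  have tot: "(\<Sum>w\<in>\<Union>Y. f w i) = 0" for i
  proof -
    have "(\<Sum>w\<in>\<Union>Y. f w i) = (\<Sum>e\<in>Y. c e * (\<Sum>w\<in>\<Union>Y. rig_row d p e (w, i)))"
      unfolding f_def sum_distrib_left by (rule sum.swap)
    also have "\<dots> = (\<Sum>e\<in>Y. c e * 0)"
    proof (rule sum.cong)
      fix e assume e: "e \<in> Y"
      have "(\<Sum>w\<in>\<Union>Y. rig_row d p e (w, i)) = (\<Sum>w\<in>e. rig_row d p e (w, i))"
        by (rule sum.mono_neutral_right) (use fU e in \<open>auto simp: rig_row_def\<close>)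
      also have "\<dots> = 0" using block_zero fe e by blast
      finally show "c e * (\<Sum>w\<in>\<Union>Y. rig_row d p e (w, i)) = c e * 0" by simp
    qed simp
    finally show ?thesis by simp
  qed
  show ?thesis
  proof (cases "w \<in> \<Union>Y \<inter> \<Union>Z")
    case False
    then show ?thesis using outY[of w i] outZ[of w i] unfolding f_def by blast
  next
    case True
    have "(\<Sum>w\<in>\<Union>Y. f w i) = f w i + (\<Sum>w'\<in>\<Union>Y - {w}. f w' i)"
      by (rule sum.remove) (use True fU in blast)+
    also have "(\<Sum>w'\<in>\<Union>Y - {w}. f w' i) = 0"
    proof (rule sum.neutral, intro ballI)
      fix w' assume w': "w' \<in> \<Union>Y - {w}"
      then have "w' \<notin> \<Union>Z" using uniq True by blast
      then show "f w' i = 0" by (rule outZ)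
    qed
    finally show ?thesis using tot[of i] f_def by simp
  qed
qed

lemma rank_union:
  assumes fY: "finite Y" and fZ: "finite Z" and disj: "Y \<inter> Z = {}"
    and fe: "\<forall>e\<in>Y\<union>Z. finite e"
    and uniq: "\<forall>u v. u \<in> \<Union>Y \<inter> \<Union>Z \<longrightarrow> v \<in> \<Union>Y \<inter> \<Union>Z \<longrightarrow> u = v"
  shows "rig_rank d p (Y \<union> Z) = rig_rank d p Y + rig_rank d p Z"
proof (rule antisym)
  obtain S where S: "S \<subseteq> Y \<union> Z" "rig_indep d p S" "card S = rig_rank d p (Y \<union> Z)"
    using rank_obtain[of "Y \<union> Z" d p] fY fZ by auto
  have fS: "finite S" using S(1) fY fZ finite_subset by blast
  have "card S = card (S \<inter> Y) + card (S \<inter> Z)"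
  proof -
    have "S = (S \<inter> Y) \<union> (S \<inter> Z)" using S(1) by blast
    then have "card S = card ((S \<inter> Y) \<union> (S \<inter> Z))" by simp
    also have "\<dots> = card (S \<inter> Y) + card (S \<inter> Z)"
      by (rule card_Un_disjoint) (use fS disj in auto)
    finally show ?thesis .
  qed
  moreover have "card (S \<inter> Y) \<le> rig_rank d p Y"
    by (rule rank_ge) (use fY indep_subset[OF S(2) _ fS] in auto)
  moreover have "card (S \<inter> Z) \<le> rig_rank d p Z"
    by (rule rank_ge) (use fZ indep_subset[OF S(2) _ fS] in auto)
  ultimately show "rig_rank d p (Y \<union> Z) \<le> rig_rank d p Y + rig_rank d p Z"
    using S(3) by simp
next
  obtain S1 where S1: "S1 \<subseteq> Y" "rig_indep d p S1" "card S1 = rig_rank d p Y"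
    using rank_obtain[of Y d p] fY by auto
  obtain S2 where S2: "S2 \<subseteq> Z" "rig_indep d p S2" "card S2 = rig_rank d p Z"
    using rank_obtain[of Z d p] fZ by auto
  have f1: "finite S1" using S1(1) fY finite_subset by blast
  have f2: "finite S2" using S2(1) fZ finite_subset by blast
  have ind: "rig_indep d p (S1 \<union> S2)"
    unfolding rig_indep_def
  proof (intro allI impI)
    fix c :: "'a set \<Rightarrow> real"
    assume h: "\<forall>w i. (\<Sum>e\<in>S1 \<union> S2. c e * rig_row d p e (w, i)) = 0"
    define c' where "c' e = (if e \<in> S1 \<union> S2 then c e else 0)" for e
    have dep: "\<forall>w i. (\<Sum>e\<in>Y \<union> Z. c' e * rig_row d p e (w, i)) = 0"
    proof (intro allI)
      fix w i
      have "(\<Sum>e\<in>Y \<union> Z. c' e * rig_row d p e (w, i)) = (\<Sum>e\<in>S1 \<union> S2. c' e * rig_row d p e (w, i))"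
        by (rule sum.mono_neutral_right) (use fY fZ S1(1) S2(1) in \<open>auto simp: c'_def\<close>)
      also have "\<dots> = (\<Sum>e\<in>S1 \<union> S2. c e * rig_row d p e (w, i))"
        by (rule sum.cong) (auto simp: c'_def)
      finally show "(\<Sum>e\<in>Y \<union> Z. c' e * rig_row d p e (w, i)) = 0" using h by simp
    qed
    have dY: "(\<Sum>e\<in>Y. c' e * rig_row d p e (w, i)) = 0" for w i
      by (rule sep_one[OF fY fZ disj _ uniq dep]) (use fe in auto)
    have dZ: "(\<Sum>e\<in>Z. c' e * rig_row d p e (w, i)) = 0" for w i
    proof (rule sep_one[OF fZ fY _ _ _])
      show "Z \<inter> Y = {}" using disj by blast
      show "\<forall>e\<in>Z. finite e" using fe by auto
      show "\<forall>u v. u \<in> \<Union>Z \<inter> \<Union>Y \<longrightarrow> v \<in> \<Union>Z \<inter> \<Union>Y \<longrightarrow> u = v" using uniq by blast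
      show "\<forall>w i. (\<Sum>e\<in>Z \<union> Y. c' e * rig_row d p e (w, i)) = 0" using dep by (simp add: Un_commute)
    qed
    have "\<forall>w i. (\<Sum>e\<in>S1. c e * rig_row d p e (w, i)) = 0"
    proof (intro allI)
      fix w i
      have "(\<Sum>e\<in>Y. c' e * rig_row d p e (w, i)) = (\<Sum>e\<in>S1. c' e * rig_row d p e (w, i))"
        by (rule sum.mono_neutral_right) (use fY S1(1) disj S2(1) in \<open>auto simp: c'_def\<close>)
      also have "\<dots> = (\<Sum>e\<in>S1. c e * rig_row d p e (w, i))"
        by (rule sum.cong) (auto simp: c'_def)
      finally show "(\<Sum>e\<in>S1. c e * rig_row d p e (w, i)) = 0" using dY by simp
    qed
    then have z1: "\<forall>e\<in>S1. c e = 0" by (rule indepD[OF S1(2)])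
    have "\<forall>w i. (\<Sum>e\<in>S2. c e * rig_row d p e (w, i)) = 0"
    proof (intro allI)
      fix w i
      have "(\<Sum>e\<in>Z. c' e * rig_row d p e (w, i)) = (\<Sum>e\<in>S2. c' e * rig_row d p e (w, i))"
        by (rule sum.mono_neutral_right) (use fZ S2(1) disj S1(1) in \<open>auto simp: c'_def\<close>)
      also have "\<dots> = (\<Sum>e\<in>S2. c e * rig_row d p e (w, i))"
        by (rule sum.cong) (auto simp: c'_def)
      finally show "(\<Sum>e\<in>S2. c e * rig_row d p e (w, i)) = 0" using dZ by simp
    qed
    then have z2: "\<forall>e\<in>S2. c e = 0" by (rule indepD[OF S2(2)])
    show "\<forall>e\<in>S1 \<union> S2. c e = 0" using z1 z2 by blast
  qed
  have "card (S1 \<union> S2) = card S1 + card S2"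
    by (rule card_Un_disjoint) (use f1 f2 S1(1) S2(1) disj in auto)
  moreover have "card (S1 \<union> S2) \<le> rig_rank d p (Y \<union> Z)"
    by (rule rank_ge) (use fY fZ S1(1) S2(1) ind in auto)
  ultimately show "rig_rank d p Y + rig_rank d p Z \<le> rig_rank d p (Y \<union> Z)"
    using S1(3) S2(3) by simp
qed

theorem proposition3p10:
  fixes d k :: nat and V :: "'v set" and D :: "'v set set"
    and p :: "'v \<Rightarrow> nat \<Rightarrow> real" and P :: "'v set set set"
  assumes "d \<ge> 1" and "k \<ge> 1"
    and "finite V"
    and "D \<subseteq> {e. e \<subseteq> V \<and> card e = 2}"
    and "generic d V p"
    and "kfold_circuit d p k D"
    and "principal_partition d p k D P"
    and "card {v \<in> V. technicolour P v} \<le> 1"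
  shows "card P = k"
proof -
  have fD: "finite D" using assms(6) unfolding kfold_circuit_def by blast
  have fe: "\<forall>e\<in>D. finite e"
  proof
    fix e assume "e \<in> D"
    then have "card e = 2" using assms(4) by blast
    then show "finite e" using card.infinite by fastforce
  qed
  have eV: "\<forall>e\<in>D. e \<subseteq> V" using assms(4) by blast
  have UP: "\<Union>P = D" and disjP: "\<forall>A\<in>P. \<forall>B\<in>P. A \<noteq> B \<longrightarrow> A \<inter> B = {}"
    and eqs: "{D - A | A. A \<in> P} = {D'. D' \<subseteq> D \<and> kfold_circuit d p (k - 1) D'}"
    using assms(7) unfolding principal_partition_def by blast+
  have fUP: "finite (\<Union>P)" using UP fD by simp
  have fP: "finite P" using finite_UnionD[OF fUP] .
  have fA: "A \<in> P \<Longrightarrow> finite A" for A using finite_subset[OF Union_upper fUP] by blast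
  have ftech: "finite {v \<in> V. technicolour P v}" using assms(3) by simp
  have tuniq: "\<And>u v. u \<in> V \<Longrightarrow> technicolour P u \<Longrightarrow> v \<in> V \<Longrightarrow> technicolour P v \<Longrightarrow> u = v"
    using assms(8) card_le_Suc0_iff_eq[OF ftech] by auto
  have key: "Q \<subseteq> P \<Longrightarrow> rig_rank d p (\<Union>Q) = (\<Sum>A\<in>Q. rig_rank d p A)" for Q
  proof -
    assume QP: "Q \<subseteq> P"
    then have fQ: "finite Q" using fP finite_subset by blast
    show ?thesis using fQ QP
    proof (induction Q rule: finite_induct)
      case empty
      have "rig_rank d p {} = 0"
        using rank_obtain[of "{}" d p] by auto
      then show ?case by simp
    next
      case (insert A Q)
      have AP: "A \<in> P" using insert by blast
      have QP': "Q \<subseteq> P" using insert by blast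
      have "rig_rank d p (\<Union>(insert A Q)) = rig_rank d p (A \<union> \<Union>Q)" by simp
      also have "\<dots> = rig_rank d p A + rig_rank d p (\<Union>Q)"
      proof (rule rank_union)
        show "finite A" using fA AP .
        show "finite (\<Union>Q)" by (intro finite_Union) (use insert(1) fA QP' in blast)+
        show "A \<inter> \<Union>Q = {}"
        proof (rule equals0I)
          fix e assume "e \<in> A \<inter> \<Union>Q"
          then obtain B where B: "B \<in> Q" "e \<in> A" "e \<in> B" by blast
          have "A \<noteq> B" using B(1) insert(2) by blast
          moreover have "B \<in> P" using B(1) QP' by blast
          ultimately have "A \<inter> B = {}" using disjP AP by blast
          then show False using B by blast
        qed
        have "A \<union> \<Union>Q \<subseteq> D" using UP AP QP' by blast
        then show "\<forall>e\<in>A \<union> \<Union>Q. finite e" using fe by blast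
        have tc: "u \<in> V \<and> technicolour P u" if uA: "u \<in> \<Union>A \<inter> \<Union>(\<Union>Q)" for u
        proof -
          obtain e where e: "e \<in> A" "u \<in> e" using uA by blast
          obtain B e' where B: "B \<in> Q" "e' \<in> B" "u \<in> e'" using uA by blast
          have "A \<noteq> B" using B insert(2) by blast
          moreover have BP: "B \<in> P" using B(1) QP' by blast
          moreover have "\<exists>x\<in>A. u \<in> x" using e by blast
          moreover have "\<exists>x\<in>B. u \<in> x" using B(2,3) by blast
          ultimately have "technicolour P u" unfolding technicolour_def using AP by blast
          moreover have "u \<in> V" using eV e UP AP by blast
          ultimately show ?thesis by blast
        qed
        show "\<forall>u v. u \<in> \<Union>A \<inter> \<Union>(\<Union>Q) \<longrightarrow> v \<in> \<Union>A \<inter> \<Union>(\<Union>Q) \<longrightarrow> u = v"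
        proof (intro allI impI)
          fix u v assume u: "u \<in> \<Union>A \<inter> \<Union>(\<Union>Q)" and v: "v \<in> \<Union>A \<inter> \<Union>(\<Union>Q)"
          have "u \<in> V \<and> technicolour P u" by (rule tc[OF u])
          moreover have "v \<in> V \<and> technicolour P v" by (rule tc[OF v])
          ultimately show "u = v" using tuniq[of u v] by blast
        qed
      qed
      also have "\<dots> = rig_rank d p A + (\<Sum>B\<in>Q. rig_rank d p B)"
        using insert.IH[OF QP'] by simp
      also have "\<dots> = (\<Sum>B\<in>insert A Q. rig_rank d p B)"
        using insert(1,2) by simp
      finally show ?case .
    qed
  qed
  have each: "int (rig_rank d p A) = int (card A) - 1" if AP: "A \<in> P" for A
  proof -
    have DA: "D - A = \<Union>(P - {A})"
    proof
      show "D - A \<subseteq> \<Union>(P - {A})" using UP by blast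
      show "\<Union>(P - {A}) \<subseteq> D - A"
      proof
        fix e assume "e \<in> \<Union>(P - {A})"
        then obtain B where B: "B \<in> P" "B \<noteq> A" "e \<in> B" by blast
        then have "A \<inter> B = {}" using disjP AP by blast
        moreover have "e \<in> D" using B UP by blast
        ultimately show "e \<in> D - A" using B by blast
      qed
    qed
    have AD: "A \<subseteq> D" using UP AP by blast
    have k1: "rig_rank d p D = (\<Sum>B\<in>P. rig_rank d p B)" using key[of P] UP by simp
    have k2: "rig_rank d p (D - A) = (\<Sum>B\<in>P - {A}. rig_rank d p B)" using key[of "P - {A}"] DA by simp
    have r1: "rig_rank d p D = rig_rank d p A + rig_rank d p (D - A)"
      unfolding k1 k2 by (rule sum.remove[OF fP AP])
    have c1: "card D = card A + card (D - A)"
      using card_Diff_subset[OF fA[OF AP] AD] card_mono[OF fD AD] by linarith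
    have "D - A \<in> {D - A | A. A \<in> P}" using AP by blast
    then have "D - A \<in> {D'. D' \<subseteq> D \<and> kfold_circuit d p (k - 1) D'}"
      unfolding eqs .
    then have "int (rig_rank d p (D - A)) = int (card (D - A)) - int (k - 1)"
      unfolding kfold_circuit_def by blast
    moreover have "int (rig_rank d p D) = int (card D) - int k"
      using assms(6) unfolding kfold_circuit_def by blast
    ultimately show ?thesis using r1 c1 assms(2) by linarith
  qed
  have "int (rig_rank d p D) = (\<Sum>A\<in>P. int (rig_rank d p A))"
    using key[of P] UP by simp
  also have "\<dots> = (\<Sum>A\<in>P. int (card A) - 1)"
    using each by (rule sum.cong[OF refl])
  also have "\<dots> = int (\<Sum>A\<in>P. card A) - int (card P)"
    by (simp add: sum_subtractf)
  also have "(\<Sum>A\<in>P. card A) = card D"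
  proof -
    have pw: "pairwise disjnt P" unfolding pairwise_def disjnt_def using disjP by blast
    have "card (\<Union>P) = (\<Sum>A\<in>P. card A)"
      by (rule card_Union_disjoint[OF pw]) (use fA in blast)
    then show ?thesis using UP by simp
  qed
  finally have "int (rig_rank d p D) = int (card D) - int (card P)" .
  moreover have "int (rig_rank d p D) = int (card D) - int k"
    using assms(6) unfolding kfold_circuit_def by blast
  ultimately show ?thesis by linarith
qed

end
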